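(* Let $a,b,c\in C(\mathbb{R}^+)$, let $y\not\equiv0$ be a solution of $\dddot y+a(t)\ddot y+b(t)\dot y+c(t)y=0$, and let $\kappa(t)=x(t)/|x(t)|$ where $x(t)=(y(t),\dot y(t),\ddot y(t))$. Let $[t_0,t_1]\subset\mathbb{R}^+$ be such that $\kappa(t)$ is not a pole $(0,0,\pm1)$ for $t\in[t_0,t_1]$, and write $\kappa(t)=P(\varphi(t),\theta(t))$ with continuous $\varphi,\theta$. Suppose $\varphi(t_0)\equiv\varphi(t_1)\equiv\frac{\pi}{2}\pmod{2\pi}$ and $\varphi(t_1)=\varphi(t_0)-2\pi$. Then there is a continuous curve $\tilde\kappa:[0,1]\to S^2\setminus\Omega$ with $\tilde\kappa(0)=\kappa(t_0)$, $\tilde\kappa(1)=\kappa(t_1)$, whose image is contained in $\kappa([t_0,t_1])$ (i.e. it is obtained from $\kappa|_{[t_0,t_1]}$ by deleting some parts).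
   Context: $S^2$ is the unit sphere in $\mathbb{R}^3$ and $P(\varphi,\theta)=(\cos\theta\cos\varphi,\cos\theta\sin\varphi,\sin\theta)\in S^2$ denotes the point with spherical coordinates $\varphi$ (longitude) and $\theta\in[-\pi/2,\pi/2]$ (latitude); thus $y=|x|\cos\theta\cos\varphi$, $\dot y=|x|\cos\theta\sin\varphi$, $\ddot y=|x|\sin\theta$. $\Omega=\{(x_0,x_1,x_2)\in S^2: x_0x_2-x_1^2>0\}$. *)

theory Defs
  imports "HOL-Analysis.Analysis"
begin

definition sph_pt :: "real \<Rightarrow> real \<Rightarrow> real^3" where
  "sph_pt phi theta = vector [cos theta * cos phi, cos theta * sin phi, sin theta]"

definition Omega :: "(real^3) set" where
  "Omega = {x \<in> sphere 0 1. x$1 * x$3 - (x$2)^2 > 0}"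

definition kappa :: "(real \<Rightarrow> real) \<Rightarrow> (real \<Rightarrow> real) \<Rightarrow> (real \<Rightarrow> real) \<Rightarrow> real \<Rightarrow> real^3" where
  "kappa y y1 y2 t = (let x = vector [y t, y1 t, y2 t] :: real^3 in (1 / norm x) *\<^sub>R x)"

end

theory Submission
  imports Defs
begin


context
  fixes ph th :: "real \<Rightarrow> real" and t0 t1 :: real
  assumes t01: "t0 \<le> t1"
    and cph: "continuous_on {t0..t1} ph" and cth: "continuous_on {t0..t1} th"
    and thr: "\<And>t. t \<in> {t0..t1} \<Longrightarrow> -(pi/2) < th t \<and> th t < pi/2"
    and der: "\<And>t. t \<in> {t0..t1} \<Longrightarrow> (ph has_real_derivative (tan (th t) * cos (ph t) - (sin (ph t))\<^sup>2)) (at t within {t0..t1})"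
    and c0: "cos (ph t0) = 0" and c1: "cos (ph t1) = 0" and lt: "ph t1 < ph t0"
begin

definition "EE t = tan (th t) * cos (ph t) - (sin (ph t))\<^sup>2"

lemma EE_cos0: "cos (ph t) = 0 \<Longrightarrow> EE t = -1"
  unfolding EE_def using sin_cos_squared_add[of "ph t"] by simp

lemma Kne: "v \<in> {ph t1..ph t0} \<Longrightarrow> \<exists>t\<in>{t0..t1}. ph t = v"
  using IVT2'[of ph t1 v t0, OF _ _ t01 cph] by auto

lemma Kcompact: "compact {t\<in>{t0..t1}. ph t = v}"
proof -
  have "closed ({t0..t1} \<inter> ph -` {v})"
    by (rule continuous_closed_preimage[OF cph]) auto
  moreover have "{t\<in>{t0..t1}. ph t = v} = {t0..t1} \<inter> ph -` {v}" by auto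
  ultimately show ?thesis
    by (metis bounded_Int bounded_closed_interval compact_eq_bounded_closed)
qed

lemma Lcross: assumes v: "v \<in> {ph t1..ph t0}" shows "\<exists>t\<in>{t0..t1}. ph t = v \<and> EE t \<le> 0"
proof -
  obtain t where t: "t \<in> {t\<in>{t0..t1}. ph t = v}" and tmax: "\<forall>s\<in>{t\<in>{t0..t1}. ph t = v}. s \<le> t"
    using compact_attains_sup[OF Kcompact] Kne[OF v] by blast
  show ?thesis
  proof (cases "t = t1 \<or> t = t0")
    case True then show ?thesis using t EE_cos0 c0 c1 by force
  next
    case False
    with t have tin: "t0 < t" "t < t1" by auto
    have "EE t \<le> 0"
    proof (rule ccontr)
      assume "\<not> EE t \<le> 0"
      then obtain d where d: "d > 0" "\<forall>h>0. t + h \<in> {t0..t1} \<longrightarrow> h < d \<longrightarrow> ph t < ph (t + h)"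
        using has_real_derivative_pos_inc_right[OF der[of t]] t unfolding EE_def by force
      define h where "h = min d (t1 - t) / 2"
      have h: "0 < h" "h < d" "h < t1 - t" using d(1) tin unfolding h_def by (auto simp: min_def field_simps)
      define u where "u = t + h"
      have u: "t < u" "u \<le> t1" using h unfolding u_def by auto
      have "ph u > v" using d(2)[rule_format, of h] t tin h by (auto simp: u_def)
      moreover have "ph t1 \<le> v" using v by auto
      moreover have "continuous_on {u..t1} ph" using cph u tin by (auto intro: continuous_on_subset)
      ultimately obtain r where "u \<le> r" "r \<le> t1" "ph r = v"
        using IVT2'[of ph t1 v u] u by auto
      then have "r \<in> {t\<in>{t0..t1}. ph t = v}" using u tin by auto
      then have "r \<le> t" using tmax by blast
      then show False using \<open>u \<le> r\<close> u by linarith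
    qed
    then show ?thesis using t by auto
  qed
qed

lemma Ssingle:
  assumes cv: "cos v = 0" and a: "a \<in> {t0..t1}" "ph a = v" and b: "b \<in> {t0..t1}" "ph b = v" and ab: "a < b"
  shows False
proof -
  have Ea: "EE a = -1" "EE b = -1" using EE_cos0 cv a b by auto
  obtain d1 where d1: "d1 > 0" "\<forall>h>0. a + h \<in> {t0..t1} \<longrightarrow> h < d1 \<longrightarrow> ph a > ph (a + h)"
    using has_real_derivative_neg_dec_right[OF der[OF a(1)]] Ea unfolding EE_def by force
  define h1 where "h1 = min d1 (b - a) / 2"
  have h1: "0 < h1" "h1 < d1" "h1 < b - a" using d1(1) ab unfolding h1_def by (auto simp: min_def field_simps)
  define c where "c = a + h1"
  have c: "a < c" "c < b" using h1 unfolding c_def by auto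
  have phc: "ph c < v" using d1(2)[rule_format, of h1] a b ab h1 c
    by (auto simp: c_def)
  have cZ: "compact {t\<in>{c..b}. ph t = v}"
  proof -
    have "closed ({c..b} \<inter> ph -` {v})"
      by (rule continuous_closed_preimage) (use cph a b c in \<open>auto intro: continuous_on_subset\<close>)
    moreover have "{t\<in>{c..b}. ph t = v} = {c..b} \<inter> ph -` {v}" by auto
    ultimately show ?thesis
      by (metis bounded_Int bounded_closed_interval compact_eq_bounded_closed)
  qed
  obtain z where z: "z \<in> {t\<in>{c..b}. ph t = v}" and zmin: "\<forall>s\<in>{t\<in>{c..b}. ph t = v}. z \<le> s"
    using compact_attains_inf[OF cZ] b c by fastforce
  have zc: "c < z" using z phc by (cases "z = c") auto
  have below: "ph s < v" if s: "c \<le> s" "s < z" for s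
  proof (rule ccontr)
    assume "\<not> ph s < v"
    moreover have "continuous_on {c..s} ph" using cph a b c z s by (auto intro: continuous_on_subset)
    ultimately obtain r where "c \<le> r" "r \<le> s" "ph r = v"
      using IVT'[of ph c v s] phc s by auto
    then show False using zmin s z by force
  qed
  have zin: "z \<in> {t0..t1}" using z a b c by auto
  have Ez: "EE z = -1" using EE_cos0 cv z by auto
  obtain d2 where d2: "d2 > 0" "\<forall>h>0. z - h \<in> {t0..t1} \<longrightarrow> h < d2 \<longrightarrow> ph z < ph (z - h)"
    using has_real_derivative_neg_dec_left[OF der[OF zin]] Ez unfolding EE_def by force
  define h where "h = min d2 (z - c) / 2"
  have h: "h > 0" "h < d2" "c \<le> z - h" "z - h < z" using d2(1) zc unfolding h_def by (auto simp: min_def field_simps)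
  have "z - h \<in> {t0..t1}" using h zin a c by auto
  then have "ph z < ph (z - h)" using d2 h by auto
  moreover have "ph (z - h) < v" using below h by auto
  ultimately show False using z by auto
qed

lemma G1:
  assumes e: "e > 0"
  shows "\<exists>d>0. \<forall>w t. \<bar>w - v\<bar> < d \<longrightarrow> t \<in> {t0..t1} \<longrightarrow> ph t = w \<longrightarrow>
            (\<exists>s\<in>{t0..t1}. ph s = v \<and> \<bar>th t - th s\<bar> < e)"
proof -
  define K where "K = {s\<in>{t0..t1}. ph s = v}"
  define A where "A = {t\<in>{t0..t1}. \<forall>s\<in>K. e \<le> \<bar>th t - th s\<bar>}"
  have "closed ({t0..t1} \<inter> (\<Inter>s\<in>K. ({t0..t1} \<inter> (\<lambda>t. \<bar>th t - th s\<bar>) -` {e..})))"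
  proof -
    have cl: "closed ({t0..t1} \<inter> (\<lambda>t. \<bar>th t - th s\<bar>) -` {e..})" for s
    proof -
      have "continuous_on {t0..t1} (\<lambda>t. \<bar>th t - th s\<bar>)"
        by (intro continuous_on_rabs continuous_on_diff cth continuous_on_const)
      then show ?thesis by (rule continuous_closed_preimage) auto
    qed
    show ?thesis by (intro closed_Int closed_atLeastAtMost closed_INT ballI cl)
  qed
  moreover have "A = {t0..t1} \<inter> (\<Inter>s\<in>K. ({t0..t1} \<inter> (\<lambda>t. \<bar>th t - th s\<bar>) -` {e..}))"
    by (auto simp: A_def)
  ultimately have "closed A" by simp
  moreover have "A = {t0..t1} \<inter> A" by (auto simp: A_def)
  ultimately have cA: "compact A" using compact_Int_closed[OF compact_Icc, of A t0 t1] by simp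
  have "A \<subseteq> {t0..t1}" by (auto simp: A_def)
  then have cpA: "compact (ph ` A)"
    using compact_continuous_image[OF continuous_on_subset[OF cph] cA] by blast
  have vA: "v \<notin> ph ` A" using e by (auto simp: A_def K_def)
  show ?thesis
  proof (cases "A = {}")
    case True
    show ?thesis
    proof (rule exI[of _ 1], intro conjI allI impI)
      fix w t assume w: "t \<in> {t0..t1}" "ph t = w"
      show "\<exists>s\<in>{t0..t1}. ph s = v \<and> \<bar>th t - th s\<bar> < e"
      proof (rule ccontr)
        assume "\<not> ?thesis"
        then have "t \<in> A" using w unfolding A_def K_def by (auto simp: not_less)
        then show False using True by simp
      qed
    qed simp
  next
    case False
    define d where "d = infdist v (ph ` A)"
    have d: "d > 0" unfolding d_def
      by (rule infdist_pos_not_in_closed) (use cpA vA False compact_imp_closed in auto)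
    show ?thesis
    proof (rule exI[of _ d], intro conjI allI impI d)
      fix w t assume w: "\<bar>w - v\<bar> < d" "t \<in> {t0..t1}" "ph t = w"
      show "\<exists>s\<in>{t0..t1}. ph s = v \<and> \<bar>th t - th s\<bar> < e"
      proof (rule ccontr)
        assume "\<not> ?thesis"
        then have "t \<in> A" using w by (auto simp: A_def K_def not_less)
        then have "d \<le> dist v (ph t)" unfolding d_def by (intro infdist_le) auto
        then show False using w by (auto simp: dist_real_def)
      qed
    qed
  qed
qed


definition "sg v = (if cos v < 0 then -1 else (1::real))"

lemma sg_cases: "sg v = 1 \<or> sg v = -1" by (auto simp: sg_def)

definition "tau v = (SOME t. t \<in> {t0..t1} \<and> ph t = v \<and> (\<forall>s\<in>{t0..t1}. ph s = v \<longrightarrow> sg v * th t \<le> sg v * th s))"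

lemma tau: assumes v: "v \<in> {ph t1..ph t0}"
  shows "tau v \<in> {t0..t1} \<and> ph (tau v) = v \<and> (\<forall>s\<in>{t0..t1}. ph s = v \<longrightarrow> sg v * th (tau v) \<le> sg v * th s)"
proof -
  have "continuous_on {t\<in>{t0..t1}. ph t = v} (\<lambda>t. sg v * th t)"
    by (intro continuous_intros continuous_on_subset[OF cth]) auto
  then obtain t where "t \<in> {t\<in>{t0..t1}. ph t = v}" "\<forall>s\<in>{t\<in>{t0..t1}. ph t = v}. sg v * th t \<le> sg v * th s"
    using continuous_attains_inf[OF Kcompact] Kne[OF v] by blast
  then have "\<exists>t. t \<in> {t0..t1} \<and> ph t = v \<and> (\<forall>s\<in>{t0..t1}. ph s = v \<longrightarrow> sg v * th t \<le> sg v * th s)"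
    by auto
  then show ?thesis unfolding tau_def by (rule someI_ex)
qed

lemma tauE: assumes v: "v \<in> {ph t1..ph t0}" shows "EE (tau v) \<le> 0"
proof -
  obtain t where t: "t \<in> {t0..t1}" "ph t = v" "EE t \<le> 0" using Lcross[OF v] by auto
  have tv: "tau v \<in> {t0..t1}" "ph (tau v) = v" "sg v * th (tau v) \<le> sg v * th t"
    using tau[OF v] t by auto
  have r1: "-(pi/2) < th t" "th t < pi/2" "-(pi/2) < th (tau v)" "th (tau v) < pi/2"
    using thr t(1) tv(1) by auto
  consider "cos v > 0" | "cos v < 0" | "cos v = 0" by linarith
  then show ?thesis
  proof cases
    case 1
    then have "th (tau v) \<le> th t" using tv by (auto simp: sg_def)
    then have "tan (th (tau v)) \<le> tan (th t)" using r1 by (intro tan_mono_le) auto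
    then have "tan (th (tau v)) * cos v \<le> tan (th t) * cos v" using 1 by (intro mult_right_mono) auto
    then show ?thesis using t tv unfolding EE_def by auto
  next
    case 2
    then have "th t \<le> th (tau v)" using tv by (auto simp: sg_def)
    then have "tan (th t) \<le> tan (th (tau v))" using r1 by (intro tan_mono_le) auto
    then have "tan (th (tau v)) * cos v \<le> tan (th t) * cos v" using 2 by (intro mult_right_mono_neg) auto
    then show ?thesis using t tv unfolding EE_def by auto
  next
    case 3 then show ?thesis using EE_cos0 tv by auto
  qed
qed

lemma tau_single: assumes v: "v \<in> {ph t1..ph t0}" and cv: "cos v = 0" and s: "s \<in> {t0..t1}" "ph s = v"
  shows "tau v = s"
  using tau[OF v] Ssingle[OF cv] s by (metis linorder_neqE_linordered_idom)

lemma tau_t0: "tau (ph t0) = t0"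
  using tau_single[of "ph t0" t0] c0 t01 lt by auto
lemma tau_t1: "tau (ph t1) = t1"
  using tau_single[of "ph t1" t1] c1 t01 lt by auto

lemma isCont_eps: "isCont f (v::real) \<Longrightarrow> (e::real) > 0 \<Longrightarrow> \<exists>d>0. \<forall>w. \<bar>w - v\<bar> < d \<longrightarrow> \<bar>f w - f v\<bar> < e"
proof -
  assume "isCont f v" "e > 0"
  then obtain d where "d > 0" "\<forall>x. x \<noteq> v \<and> norm (x - v) < d \<longrightarrow> norm (f x - f v) < e"
    using LIM_D[of f "f v" v e] unfolding isCont_def by blast
  then show ?thesis using \<open>e > 0\<close> by (metis abs_zero cancel_comm_monoid_add_class.diff_cancel real_norm_def)
qed


lemma G2:
  assumes v: "v \<in> {ph t1..ph t0}" and cv: "cos v \<noteq> 0" and e: "e > 0"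
  shows "\<exists>d>0. \<forall>w\<in>{ph t1..ph t0}. \<bar>w - v\<bar> < d \<longrightarrow>
           (\<exists>t\<in>{t0..t1}. ph t = w \<and> sg v * th t < sg v * th (tau v) + e)"
proof -
  define a0 where "a0 = tau v"
  have a0: "a0 \<in> {t0..t1}" "ph a0 = v" "EE a0 \<le> 0" using tau[OF v] tauE[OF v] by (auto simp: a0_def)
  have a0i: "t0 < a0" "a0 < t1"
    using a0 c0 c1 cv by (metis atLeastAtMost_iff order_less_le)+
  consider "EE a0 < 0" | "EE a0 = 0" using a0 by linarith
  then show ?thesis
  proof cases
    case 1
    obtain eta where eta: "eta > 0" "\<forall>t\<in>{t0..t1}. dist t a0 < eta \<longrightarrow> dist (th t) (th a0) < e"
      using cth a0(1) e unfolding continuous_on_iff by blast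
    have dd: "(ph has_real_derivative EE a0) (at a0 within {t0..t1})" using der[OF a0(1)] unfolding EE_def .
    obtain d1 where d1: "d1 > 0" "\<forall>h>0. a0 + h \<in> {t0..t1} \<longrightarrow> h < d1 \<longrightarrow> ph a0 > ph (a0 + h)"
      using has_real_derivative_neg_dec_right[OF dd 1] by blast
    obtain d2 where d2: "d2 > 0" "\<forall>h>0. a0 - h \<in> {t0..t1} \<longrightarrow> h < d2 \<longrightarrow> ph a0 < ph (a0 - h)"
      using has_real_derivative_neg_dec_left[OF dd 1] by blast
    define h where "h = min (min d1 d2) (min eta (min (a0 - t0) (t1 - a0))) / 2"
    have h: "h > 0" "h < d1" "h < d2" "h < eta" "h < a0 - t0" "h < t1 - a0"
      using d1(1) d2(1) eta(1) a0i unfolding h_def by (auto simp: min_def field_simps)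
    have pb: "ph (a0 + h) < v" using d1(2) h a0 by auto
    have pa: "v < ph (a0 - h)" using d2(2) h a0 by auto
    show ?thesis
    proof (rule exI[of _ "min (v - ph (a0 + h)) (ph (a0 - h) - v)"], intro conjI ballI impI)
      show "0 < min (v - ph (a0 + h)) (ph (a0 - h) - v)" using pa pb by auto
      fix w assume w: "w \<in> {ph t1..ph t0}" "\<bar>w - v\<bar> < min (v - ph (a0 + h)) (ph (a0 - h) - v)"
      have "continuous_on {a0 - h..a0 + h} ph" using cph h a0 by (auto intro: continuous_on_subset)
      moreover have "ph (a0 + h) \<le> w" "w \<le> ph (a0 - h)" using w by auto
      ultimately obtain t where t: "a0 - h \<le> t" "t \<le> a0 + h" "ph t = w"
        using IVT2'[of ph "a0 + h" w "a0 - h"] h by auto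
      have tin: "t \<in> {t0..t1}" using t h by auto
      have "dist t a0 < eta" using t h by (auto simp: dist_real_def)
      then have "\<bar>th t - th a0\<bar> < e" using eta tin by (auto simp: dist_real_def)
      then have "sg v * th t < sg v * th a0 + e" using sg_cases[of v] by auto
      then show "\<exists>t\<in>{t0..t1}. ph t = w \<and> sg v * th t < sg v * th (tau v) + e"
        using tin t by (auto simp: a0_def)
    qed
  next
    case 2
    define T where "T w = arctan ((sin w)\<^sup>2 / cos w)" for w
    have "isCont T v" unfolding T_def using cv by (intro continuous_intros) auto
    then obtain d1 where d1: "d1 > 0" "\<forall>w. \<bar>w - v\<bar> < d1 \<longrightarrow> \<bar>T w - T v\<bar> < e"
      using isCont_eps e by blast
    obtain d2 where d2: "d2 > 0" "\<forall>w. \<bar>w - v\<bar> < d2 \<longrightarrow> \<bar>cos w - cos v\<bar> < \<bar>cos v\<bar>"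
      using isCont_eps[where f=cos and v=v and e="\<bar>cos v\<bar>"] cv by auto
    have thr0: "-(pi/2) < th a0" "th a0 < pi/2" using thr a0 by auto
    have "tan (th a0) = (sin v)\<^sup>2 / cos v" using 2 a0 cv unfolding EE_def by (auto simp: field_simps)
    then have Tv: "T v = th a0" unfolding T_def using arctan_tan thr0 by metis
    show ?thesis
    proof (rule exI[of _ "min d1 d2"], intro conjI ballI impI)
      show "0 < min d1 d2" using d1 d2 by auto
      fix w assume w: "w \<in> {ph t1..ph t0}" "\<bar>w - v\<bar> < min d1 d2"
      obtain t where t: "t \<in> {t0..t1}" "ph t = w" "EE t \<le> 0" using Lcross[OF w(1)] by auto
      have le: "tan (th t) * cos w \<le> (sin w)\<^sup>2" using t unfolding EE_def by auto
      have thrt: "-(pi/2) < th t" "th t < pi/2" using thr t by auto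
      have Tw: "\<bar>T w - T v\<bar> < e" using d1 w by auto
      have cw: "\<bar>cos w - cos v\<bar> < \<bar>cos v\<bar>" using d2 w by auto
      consider "cos v > 0" | "cos v < 0" using cv by linarith
      then have "sg v * th t < sg v * th a0 + e"
      proof cases
        case 1
        then have cwp: "cos w > 0" using cw by auto
        have "tan (th t) \<le> (sin w)\<^sup>2 / cos w" using le cwp by (simp add: pos_le_divide_eq)
        then have "arctan (tan (th t)) \<le> T w" unfolding T_def by (rule arctan_monotone')
        then have "th t \<le> T w" using arctan_tan thrt by simp
        then show ?thesis using 1 Tw Tv by (auto simp: sg_def)
      next
        case 2
        then have cwn: "cos w < 0" using cw by auto
        have "(sin w)\<^sup>2 / cos w \<le> tan (th t)" using le cwn by (simp add: neg_divide_le_eq)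
        then have "T w \<le> arctan (tan (th t))" unfolding T_def by (rule arctan_monotone')
        then have "T w \<le> th t" using arctan_tan thrt by simp
        then show ?thesis using 2 Tw Tv by (auto simp: sg_def)
      qed
      then show "\<exists>t\<in>{t0..t1}. ph t = w \<and> sg v * th t < sg v * th (tau v) + e"
        using t by (auto simp: a0_def)
    qed
  qed
qed

lemma cont_tau: "continuous_on {ph t1..ph t0} (\<lambda>v. th (tau v))"
  unfolding continuous_on_iff
proof (intro ballI allI impI)
  fix v e assume v: "v \<in> {ph t1..ph t0}" and e: "(0::real) < e"
  obtain d1 where d1: "d1 > 0" "\<forall>w t. \<bar>w - v\<bar> < d1 \<longrightarrow> t \<in> {t0..t1} \<longrightarrow> ph t = w \<longrightarrow>
            (\<exists>s\<in>{t0..t1}. ph s = v \<and> \<bar>th t - th s\<bar> < e)" using G1[OF e] by blast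
  show "\<exists>d>0. \<forall>w\<in>{ph t1..ph t0}. dist w v < d \<longrightarrow> dist (th (tau w)) (th (tau v)) < e"
  proof (cases "cos v = 0")
    case True
    show ?thesis
    proof (rule exI[of _ d1], intro conjI ballI impI d1(1))
      fix w assume w: "w \<in> {ph t1..ph t0}" "dist w v < d1"
      obtain s where s: "s \<in> {t0..t1}" "ph s = v" "\<bar>th (tau w) - th s\<bar> < e"
        using d1(2)[rule_format, of w "tau w"] tau[OF w(1)] w by (auto simp: dist_real_def)
      then show "dist (th (tau w)) (th (tau v)) < e"
        using tau_single[OF v True s(1,2)] by (simp add: dist_real_def)
    qed
  next
    case False
    obtain d2 where d2: "d2 > 0" "\<forall>w\<in>{ph t1..ph t0}. \<bar>w - v\<bar> < d2 \<longrightarrow>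
           (\<exists>t\<in>{t0..t1}. ph t = w \<and> sg v * th t < sg v * th (tau v) + e)"
      using G2[OF v False e] by blast
    obtain d3 where d3: "d3 > 0" "\<forall>w. \<bar>w - v\<bar> < d3 \<longrightarrow> \<bar>cos w - cos v\<bar> < \<bar>cos v\<bar>"
      using isCont_eps[where f=cos and v=v and e="\<bar>cos v\<bar>"] False by auto
    show ?thesis
    proof (rule exI[of _ "min d1 (min d2 d3)"], intro conjI ballI impI)
      show "0 < min d1 (min d2 d3)" using d1 d2 d3 by auto
      fix w assume w: "w \<in> {ph t1..ph t0}" "dist w v < min d1 (min d2 d3)"
      have sgw: "sg w = sg v"
        using d3(2) w False unfolding sg_def by (auto simp: dist_real_def split: if_splits)
      obtain s where s: "s \<in> {t0..t1}" "ph s = v" "\<bar>th (tau w) - th s\<bar> < e"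
        using d1(2)[rule_format, of w "tau w"] tau[OF w(1)] w by (auto simp: dist_real_def)
      have s2: "sg v * th (tau v) \<le> sg v * th s" using tau[OF v] s by auto
      obtain t where t: "t \<in> {t0..t1}" "ph t = w" "sg v * th t < sg v * th (tau v) + e"
        using d2(2) w by (auto simp: dist_real_def)
      have t2: "sg v * th (tau w) \<le> sg v * th t" using tau[OF w(1)] t sgw by auto
      show "dist (th (tau w)) (th (tau v)) < e"
        using sg_cases[of v] s s2 t t2 by (auto simp: dist_real_def)
    qed
  qed
qed


lemma core_exists:
  "\<exists>tau. (\<forall>v\<in>{ph t1..ph t0}. tau v \<in> {t0..t1} \<and> ph (tau v) = v \<and>
            tan (th (tau v)) * cos (ph (tau v)) - (sin (ph (tau v)))\<^sup>2 \<le> 0)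
        \<and> tau (ph t0) = t0 \<and> tau (ph t1) = t1 \<and> continuous_on {ph t1..ph t0} (\<lambda>v. th (tau v))"
  using tau tauE tau_t0 tau_t1 cont_tau unfolding EE_def by blast

end




lemma vec3_chi: "(vector [a, b, c] :: real^3) = (\<chi> i. if i = 1 then a else if i = 2 then b else c)"
  by (simp add: vec_eq_iff, metis exhaust_3 vector_3 num1_eq_iff)

lemma cont_vec3:
  assumes "continuous_on S f" "continuous_on S g" "continuous_on S h"
  shows "continuous_on S (\<lambda>x. vector [f x, g x, h x] :: real^3)"
  unfolding vec3_chi
  apply (intro continuous_on_vec_lambda)
  subgoal for i by (cases "i = 1"; cases "i = 2") (simp_all add: assms)
  done

lemma alg1: "(N::real) \<noteq> 0 \<Longrightarrow> C \<noteq> 0 \<Longrightarrow> (N * s * k - N * C * a * a) / (N * C) = s / C * k - a * a"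
  by (simp add: field_simps)

lemma alg2: "(C::real) > 0 \<Longrightarrow> C * p * s - (C * q)\<^sup>2 = C\<^sup>2 * (s / C * p - q\<^sup>2)"
  by (simp add: field_simps power2_eq_square)

lemma deriv_arc:
  fixes y y1 y2 :: "real \<Rightarrow> real" and c tau :: real
  assumes "(y has_real_derivative y1 tau) (at tau)" "(y1 has_real_derivative y2 tau) (at tau)"
    and p: "y tau * cos c + y1 tau * sin c \<noteq> 0"
  shows "((\<lambda>t. c + arctan ((y1 t * cos c - y t * sin c) / (y t * cos c + y1 t * sin c))) has_real_derivative inverse (1 + ((y1 tau * cos c - y tau * sin c) / (y tau * cos c + y1 tau * sin c))\<^sup>2) * (((y2 tau * cos c - y1 tau * sin c) * (y tau * cos c + y1 tau * sin c) - (y1 tau * cos c - y tau * sin c) * (y1 tau * cos c + y2 tau * sin c)) / (y tau * cos c + y1 tau * sin c)\<^sup>2)) (at tau)"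
  apply (rule derivative_eq_intros assms refl)+
  apply (simp add: power2_eq_square)
  done

theorem lemma3:
  fixes a b c y y1 y2 phi theta :: "real \<Rightarrow> real" and t0 t1 :: real
  assumes cont: "continuous_on {0<..} a" "continuous_on {0<..} b" "continuous_on {0<..} c"
    and d0: "\<And>t. t > 0 \<Longrightarrow> (y has_real_derivative y1 t) (at t)"
    and d1: "\<And>t. t > 0 \<Longrightarrow> (y1 has_real_derivative y2 t) (at t)"
    and d2: "\<And>t. t > 0 \<Longrightarrow>
               (y2 has_real_derivative (- (a t * y2 t + b t * y1 t + c t * y t))) (at t)"
    and nontriv: "\<exists>t>0. y t \<noteq> 0"
    and t0: "0 < t0" and t01: "t0 \<le> t1"
    and nopole: "\<And>t. t \<in> {t0..t1} \<Longrightarrow>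
                   kappa y y1 y2 t \<noteq> vector [0, 0, 1] \<and> kappa y y1 y2 t \<noteq> vector [0, 0, -1]"
    and cphi: "continuous_on {t0..t1} phi" and ctheta: "continuous_on {t0..t1} theta"
    and trange: "\<And>t. t \<in> {t0..t1} \<Longrightarrow> - (pi/2) \<le> theta t \<and> theta t \<le> pi/2"
    and repr: "\<And>t. t \<in> {t0..t1} \<Longrightarrow> kappa y y1 y2 t = sph_pt (phi t) (theta t)"
    and phi0: "\<exists>k::int. phi t0 = pi/2 + 2 * pi * of_int k"
    and phi1: "\<exists>k::int. phi t1 = pi/2 + 2 * pi * of_int k"
    and phi_diff: "phi t1 = phi t0 - 2 * pi"
  shows "\<exists>g :: real \<Rightarrow> real^3. continuous_on {0..1} g
           \<and> g ` {0..1} \<subseteq> sphere 0 1 - Omega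
           \<and> g 0 = kappa y y1 y2 t0 \<and> g 1 = kappa y y1 y2 t1
           \<and> g ` {0..1} \<subseteq> kappa y y1 y2 ` {t0..t1}"
proof -
  define S where "S = {t0..t1}"
  define N where "N t = norm (vector [y t, y1 t, y2 t] :: real^3)" for t
  have kap: "kappa y y1 y2 t = (1 / N t) *\<^sub>R (vector [y t, y1 t, y2 t] :: real^3)" for t
    unfolding kappa_def N_def Let_def by simp
  have comp: "y t / N t = cos (theta t) * cos (phi t) \<and> y1 t / N t = cos (theta t) * sin (phi t)
      \<and> y2 t / N t = sin (theta t)" if t: "t \<in> S" for t
  proof -
    have e: "kappa y y1 y2 t = sph_pt (phi t) (theta t)" using repr t by (auto simp: S_def)
    have "kappa y y1 y2 t $ 1 = sph_pt (phi t) (theta t) $ 1" "kappa y y1 y2 t $ 2 = sph_pt (phi t) (theta t) $ 2"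
      "kappa y y1 y2 t $ 3 = sph_pt (phi t) (theta t) $ 3" using e by auto
    then show ?thesis unfolding kap sph_pt_def by simp
  qed
  have cpos: "cos (theta t) > 0" if t: "t \<in> S" for t
  proof -
    have r: "-(pi/2) \<le> theta t" "theta t \<le> pi/2" using trange t by (auto simp: S_def)
    then have "cos (theta t) \<ge> 0" by (intro cos_ge_zero) auto
    moreover have "cos (theta t) \<noteq> 0"
    proof
      assume c0: "cos (theta t) = 0"
      then have "(sin (theta t))\<^sup>2 = 1" using sin_cos_squared_add[of "theta t"] by simp
      then have "sin (theta t) = 1 \<or> sin (theta t) = -1" by (simp add: power2_eq_1_iff)
      then have "sph_pt (phi t) (theta t) = vector [0, 0, 1] \<or> sph_pt (phi t) (theta t) = vector [0, 0, -1]"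
        unfolding sph_pt_def using c0 by auto
      then show False using nopole[of t] repr[of t] t by (auto simp: S_def)
    qed
    ultimately show ?thesis by simp
  qed
  have Npos: "N t > 0" if t: "t \<in> S" for t
  proof -
    have "N t \<noteq> 0"
    proof
      assume "N t = 0"
      then have "cos (theta t) * cos (phi t) = 0" "cos (theta t) * sin (phi t) = 0" using comp[OF t] by auto
      then have "cos (phi t) = 0" "sin (phi t) = 0" using cpos[OF t] by auto
      then show False using sin_cos_squared_add[of "phi t"] by simp
    qed
    moreover have "N t \<ge> 0" unfolding N_def by simp
    ultimately show ?thesis by simp
  qed
  have yeq: "y t = N t * cos (theta t) * cos (phi t) \<and> y1 t = N t * cos (theta t) * sin (phi t)
      \<and> y2 t = N t * sin (theta t)" if t: "t \<in> S" for t
    using comp[OF t] Npos[OF t] by (auto simp: field_simps)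
  have thr: "-(pi/2) < theta t \<and> theta t < pi/2" if t: "t \<in> {t0..t1}" for t
  proof -
    have r: "-(pi/2) \<le> theta t" "theta t \<le> pi/2" using trange t by auto
    have cp: "cos (theta t) > 0" using cpos[of t] t by (auto simp: S_def)
    have "theta t \<noteq> pi/2" "theta t \<noteq> -(pi/2)" using cp by (metis cos_pi_half less_irrefl, metis cos_minus cos_pi_half less_irrefl)
    then show ?thesis using r by auto
  qed
  have der: "(phi has_real_derivative (tan (theta tau) * cos (phi tau) - (sin (phi tau))\<^sup>2)) (at tau within {t0..t1})"
    if tau: "tau \<in> {t0..t1}" for tau
  proof -
    define c where "c = phi tau"
    obtain d where d: "d > 0" "\<forall>t\<in>{t0..t1}. dist t tau < d \<longrightarrow> dist (phi t) (phi tau) < pi/2"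
      using cphi tau unfolding continuous_on_iff by (meson pi_half_gt_zero)
    define P where "P t = y t * cos c + y1 t * sin c" for t
    define Q where "Q t = y1 t * cos c - y t * sin c" for t
    have PQ: "P t = N t * cos (theta t) * cos (phi t - c) \<and> Q t = N t * cos (theta t) * sin (phi t - c)"
      if t: "t \<in> S" for t
      using yeq[OF t] unfolding P_def Q_def cos_diff sin_diff by (simp add: algebra_simps)
    have eqn: "c + arctan (Q t / P t) = phi t" if t: "t \<in> {t0..t1}" "dist t tau < d" for t
    proof -
      have a: "\<bar>phi t - c\<bar> < pi/2" using d t by (auto simp: c_def dist_real_def)
      then have a2: "-(pi/2) < phi t - c" "phi t - c < pi/2" using abs_less_iff[of "phi t - c" "pi/2"] minus_less_iff[of "pi/2" "phi t - c"] by auto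
      then have cp: "cos (phi t - c) > 0" by (intro cos_gt_zero_pi)
      have "Q t / P t = tan (phi t - c)"
        using PQ[of t] t cp Npos[of t] cpos[of t] by (simp add: S_def tan_def)
      then show ?thesis using arctan_tan[OF a2] by auto
    qed
    have tpos: "tau > 0" using tau t0 by auto
    have Pt: "P tau = N tau * cos (theta tau)" "Q tau = 0"
      using PQ[of tau] tau by (auto simp: S_def c_def)
    have Pnz: "P tau \<noteq> 0" using Pt Npos[of tau] cpos[of tau] tau by (auto simp: S_def)
    have D: "((\<lambda>t. c + arctan (Q t / P t)) has_real_derivative
        inverse (1 + (Q tau / P tau)\<^sup>2) * (((y2 tau * cos c - y1 tau * sin c) * P tau - Q tau * (y1 tau * cos c + y2 tau * sin c)) / (P tau)\<^sup>2)) (at tau)"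
      unfolding P_def Q_def
      by (rule deriv_arc[where y=y and ?y1.0=y1 and ?y2.0=y2 and c=c and tau=tau, OF d0[OF tpos] d1[OF tpos]]) (use Pnz in \<open>simp add: P_def\<close>)
    have val: "inverse (1 + (Q tau / P tau)\<^sup>2) * (((y2 tau * cos c - y1 tau * sin c) * P tau - Q tau * (y1 tau * cos c + y2 tau * sin c)) / (P tau)\<^sup>2)
        = tan (theta tau) * cos (phi tau) - (sin (phi tau))\<^sup>2"
    proof -
      have yt: "y1 tau = N tau * cos (theta tau) * sin c" "y2 tau = N tau * sin (theta tau)"
        using yeq[of tau] tau by (auto simp: S_def c_def)
      have nz: "N tau \<noteq> 0" "cos (theta tau) \<noteq> 0" using Npos[of tau] cpos[of tau] tau by (auto simp: S_def)
      have Pn: "P tau \<noteq> 0" using Pnz .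
      have "inverse (1 + (Q tau / P tau)\<^sup>2) * (((y2 tau * cos c - y1 tau * sin c) * P tau - Q tau * (y1 tau * cos c + y2 tau * sin c)) / (P tau)\<^sup>2)
          = (y2 tau * cos c - y1 tau * sin c) / P tau"
        using Pn unfolding Pt(2) by (simp add: power2_eq_square)
      also have "\<dots> = (N tau * sin (theta tau) * cos c - N tau * cos (theta tau) * sin c * sin c) / (N tau * cos (theta tau))"
        unfolding yt Pt(1) by simp
      also have "\<dots> = sin (theta tau) / cos (theta tau) * cos c - sin c * sin c"
        by (rule alg1[OF nz])
      also have "\<dots> = tan (theta tau) * cos (phi tau) - (sin (phi tau))\<^sup>2"
        by (simp add: tan_def c_def power2_eq_square)
      finally show ?thesis .
    qed
    have D': "((\<lambda>t. c + arctan (Q t / P t)) has_real_derivative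
        (tan (theta tau) * cos (phi tau) - (sin (phi tau))\<^sup>2)) (at tau within {t0..t1})"
      using D val by (metis has_field_derivative_at_within)
    show ?thesis
      by (rule has_field_derivative_transform_within[OF D' d(1) tau]) (use eqn in auto)
  qed
  have c0: "cos (phi t0) = 0"
  proof -
    obtain k :: int where k: "phi t0 = pi/2 + 2 * pi * of_int k" using phi0 by blast
    show ?thesis unfolding k cos_add by simp
  qed
  have c1: "cos (phi t1) = 0"
  proof -
    obtain k :: int where k: "phi t1 = pi/2 + 2 * pi * of_int k" using phi1 by blast
    show ?thesis unfolding k cos_add by simp
  qed
  have lt: "phi t1 < phi t0" using phi_diff by simp
  obtain tau where tau: "\<forall>v\<in>{phi t1..phi t0}. tau v \<in> {t0..t1} \<and> phi (tau v) = v \<and>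
            tan (theta (tau v)) * cos (phi (tau v)) - (sin (phi (tau v)))\<^sup>2 \<le> 0"
      and ta0: "tau (phi t0) = t0" and ta1: "tau (phi t1) = t1"
      and ctau: "continuous_on {phi t1..phi t0} (\<lambda>v. theta (tau v))"
    using core_exists[OF t01 cphi ctheta thr der c0 c1 lt] by blast
  define V where "V l = phi t0 - 2 * pi * l" for l :: real
  have Vr: "V l \<in> {phi t1..phi t0}" if "l \<in> {0..1}" for l
    using that phi_diff by (auto simp: V_def)
  define g where "g l = kappa y y1 y2 (tau (V l))" for l
  have gsph: "g l = sph_pt (V l) (theta (tau (V l)))" if l: "l \<in> {0..1}" for l
    using repr[of "tau (V l)"] tau Vr[OF l] by (auto simp: g_def)
  show ?thesis
  proof (rule exI[of _ g], intro conjI)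
    have cV: "continuous_on {0..1} V" unfolding V_def by (intro continuous_intros)
    have cT: "continuous_on {0..1} (\<lambda>l. theta (tau (V l)))"
      by (rule continuous_on_compose2[OF ctau cV]) (use Vr in auto)
    have "continuous_on {0..1} (\<lambda>l. sph_pt (V l) (theta (tau (V l))))"
      unfolding sph_pt_def by (intro cont_vec3 continuous_intros cV cT)
    then show "continuous_on {0..1} g" by (rule continuous_on_eq) (use gsph in simp)
  next
    show "g ` {0..1} \<subseteq> sphere 0 1 - Omega"
    proof
      fix z assume "z \<in> g ` {0..1}"
      then obtain l where l: "l \<in> {0..1}" "z = g l" by auto
      define t where "t = tau (V l)"
      have t: "t \<in> S" "tan (theta t) * cos (phi t) - (sin (phi t))\<^sup>2 \<le> 0"
        using tau[rule_format, OF Vr[OF l(1)]] by (auto simp: t_def S_def)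
      have zk: "z = kappa y y1 y2 t" using l by (simp add: g_def t_def)
      have "norm z = 1" unfolding zk kap using Npos[OF t(1)] by (simp add: N_def)
      moreover have "\<not> (z $ 1 * z $ 3 - (z $ 2)\<^sup>2 > 0)"
      proof -
        have zs: "z = sph_pt (phi t) (theta t)" using zk repr t by (auto simp: S_def)
        have cp: "cos (theta t) > 0" using cpos[OF t(1)] .
        have "z $ 1 * z $ 3 - (z $ 2)\<^sup>2 = cos (theta t) * cos (phi t) * sin (theta t) - (cos (theta t) * sin (phi t))\<^sup>2"
          unfolding zs sph_pt_def by simp
        also have "\<dots> = (cos (theta t))\<^sup>2 * (tan (theta t) * cos (phi t) - (sin (phi t))\<^sup>2)"
          unfolding tan_def by (rule alg2[OF cp])
        finally have "z $ 1 * z $ 3 - (z $ 2)\<^sup>2 = (cos (theta t))\<^sup>2 * (tan (theta t) * cos (phi t) - (sin (phi t))\<^sup>2)" .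
        moreover have "(cos (theta t))\<^sup>2 * (tan (theta t) * cos (phi t) - (sin (phi t))\<^sup>2) \<le> 0"
          using t(2) by (simp add: mult_nonneg_nonpos)
        ultimately show ?thesis by simp
      qed
      ultimately show "z \<in> sphere 0 1 - Omega" by (simp add: Omega_def)
    qed
  next
    show "g 0 = kappa y y1 y2 t0" using ta0 by (simp add: g_def V_def)
  next
    show "g 1 = kappa y y1 y2 t1" using ta1 phi_diff by (simp add: g_def V_def)
  next
    show "g ` {0..1} \<subseteq> kappa y y1 y2 ` {t0..t1}"
      using tau Vr by (auto simp: g_def)
  qed
qed

end
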